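(* Suppose $x\in X\subseteq\{1,\dots,n\}$ and $\delta$ is invertible in $R$. Then the left $\mathcal P_n$-module $\mathcal A_{X,x}$ is a direct summand of $\mathcal P_n/J_{X-\{x\}}$.
   Context: $R$ is a commutative ring, $\delta\in R$, and $\mathcal P_n=\mathcal P_n(R,\delta)$ is the partition algebra: the free $R$-module on set partitions ("diagrams") of $\{-n,\dots,-1,1,\dots,n\}$ (negative = left nodes, positive = right nodes), with product by stacking, taking the induced partition on outer nodes, and multiplying by $\delta$ for each component consisting only of middle nodes. For $Z\subseteq\{1,\dots,n\}$, $J_Z$ is the left ideal spanned by diagrams in which among the right nodes labelled by $Z$ there is a singleton block or two distinct nodes in the same block. $A_x$ is the left submodule spanned by diagrams in which the right node $x$ is a singleton, and $\mathcal A_{X,x}=A_x/(A_x\cap J_{X-\{x\}})$, a submodule of $\mathcal P_n/J_{X-\{x\}}$. *)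

theory Defs
  imports Main "HOL-Library.Disjoint_Sets"
begin

text \<open>Nodes of a partition diagram on n+n nodes: left nodes -n..-1, right nodes 1..n.\<close>
definition nodes :: "nat \<Rightarrow> int set" where
  "nodes n = {- int n .. -1} \<union> {1 .. int n}"

definition diagrams :: "nat \<Rightarrow> int set set set" where
  "diagrams n = {d. partition_on (nodes n) d}"

text \<open>Stacking d1 (left) against d2 (right): right nodes of d1 are glued to the
  left nodes of d2.  Vertices are tagged: (i,0) left outer nodes (i<0),
  (i,1) middle nodes (i>0), (i,2) right outer nodes (i>0).\<close>
definition tag1 :: "int set \<Rightarrow> (int \<times> nat) set" where
  "tag1 B = (\<lambda>i. if i < 0 then (i, 0) else (i, 1)) ` B"

definition tag2 :: "int set \<Rightarrow> (int \<times> nat) set" where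
  "tag2 B = (\<lambda>i. if i < 0 then (- i, 1) else (i, 2)) ` B"

definition stack :: "int set set \<Rightarrow> int set set \<Rightarrow> (int \<times> nat) set set" where
  "stack d1 d2 = tag1 ` d1 \<union> tag2 ` d2"

definition same_block :: "'a set set \<Rightarrow> ('a \<times> 'a) set" where
  "same_block S = {(u, v). \<exists>B\<in>S. u \<in> B \<and> v \<in> B}"

definition components :: "'a set set \<Rightarrow> 'a set set" where
  "components S = (\<Union>S) // ((same_block S)\<^sup>*)"

definition outer :: "int \<times> nat \<Rightarrow> bool" where
  "outer u \<longleftrightarrow> snd u \<noteq> 1"

definition compose :: "int set set \<Rightarrow> int set set \<Rightarrow> int set set" where
  "compose d1 d2 =
     {fst ` (C \<inter> Collect outer) | C. C \<in> components (stack d1 d2) \<and> (\<exists>u\<in>C. outer u)}"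

definition nmid :: "int set set \<Rightarrow> int set set \<Rightarrow> nat" where
  "nmid d1 d2 = card {C \<in> components (stack d1 d2). \<forall>u\<in>C. \<not> outer u}"

text \<open>The partition algebra P_n(R,delta): R-valued functions on the finite set of
  diagrams (free R-module on diagrams), with the stacking product.\<close>
definition Pn :: "nat \<Rightarrow> (int set set \<Rightarrow> 'r::comm_ring_1) set" where
  "Pn n = {f. \<forall>d. d \<notin> diagrams n \<longrightarrow> f d = 0}"

definition pmult :: "'r::comm_ring_1 \<Rightarrow> nat \<Rightarrow> (int set set \<Rightarrow> 'r) \<Rightarrow> (int set set \<Rightarrow> 'r)
                      \<Rightarrow> (int set set \<Rightarrow> 'r)" where
  "pmult \<delta> n f g = (\<lambda>e. \<Sum>(d1, d2) \<in> {(d1, d2). d1 \<in> diagrams n \<and> d2 \<in> diagrams n \<and> compose d1 d2 = e}.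
                         f d1 * g d2 * \<delta> ^ nmid d1 d2)"

definition span_diag :: "nat \<Rightarrow> (int set set \<Rightarrow> bool) \<Rightarrow> (int set set \<Rightarrow> 'r::comm_ring_1) set" where
  "span_diag n S = {f \<in> Pn n. \<forall>d. f d \<noteq> 0 \<longrightarrow> S d}"

definition J_ideal :: "nat \<Rightarrow> nat set \<Rightarrow> (int set set \<Rightarrow> 'r::comm_ring_1) set" where
  "J_ideal n Z = span_diag n (\<lambda>d. \<exists>B\<in>d. (\<exists>z\<in>Z. B = {int z}) \<or>
                                    (\<exists>z1\<in>Z. \<exists>z2\<in>Z. z1 \<noteq> z2 \<and> int z1 \<in> B \<and> int z2 \<in> B))"

definition A_mod :: "nat \<Rightarrow> nat \<Rightarrow> (int set set \<Rightarrow> 'r::comm_ring_1) set" where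
  "A_mod n x = span_diag n (\<lambda>d. {int x} \<in> d)"

text \<open>Cosets v + J, i.e. elements of the quotient module P_n / J.\<close>
definition coset :: "(int set set \<Rightarrow> 'r::comm_ring_1) set \<Rightarrow> (int set set \<Rightarrow> 'r) \<Rightarrow> (int set set \<Rightarrow> 'r) set" where
  "coset J v = {w. \<exists>j\<in>J. w = (\<lambda>d. v d + j d)}"

definition quot_submodule :: "'r::comm_ring_1 \<Rightarrow> nat \<Rightarrow> (int set set \<Rightarrow> 'r) set
      \<Rightarrow> (int set set \<Rightarrow> 'r) set set \<Rightarrow> bool" where
  "quot_submodule \<delta> n J N \<longleftrightarrow>
     N \<subseteq> coset J ` Pn n \<and>
     coset J (\<lambda>_. 0) \<in> N \<and>
     (\<forall>u\<in>Pn n. \<forall>v\<in>Pn n. coset J u \<in> N \<longrightarrow> coset J v \<in> N \<longrightarrow> coset J (\<lambda>d. u d + v d) \<in> N) \<and>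
     (\<forall>r. \<forall>v\<in>Pn n. coset J v \<in> N \<longrightarrow> coset J (\<lambda>d. r * v d) \<in> N) \<and>
     (\<forall>p\<in>Pn n. \<forall>v\<in>Pn n. coset J v \<in> N \<longrightarrow> coset J (pmult \<delta> n p v) \<in> N)"

definition direct_summand_quot :: "'r::comm_ring_1 \<Rightarrow> nat \<Rightarrow> (int set set \<Rightarrow> 'r) set
      \<Rightarrow> (int set set \<Rightarrow> 'r) set set \<Rightarrow> bool" where
  "direct_summand_quot \<delta> n J M \<longleftrightarrow>
     (\<exists>N. quot_submodule \<delta> n J N \<and>
          M \<inter> N = {coset J (\<lambda>_. 0)} \<and>
          (\<forall>v\<in>Pn n. \<exists>a\<in>Pn n. \<exists>c\<in>Pn n. coset J a \<in> M \<and> coset J c \<in> N \<and>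
                       coset J v = coset J (\<lambda>d. a d + c d)))"

end

theory Submission
  imports Defs
begin


definition detach :: "'a \<Rightarrow> 'a set set \<Rightarrow> 'a set set" where
  "detach u S = insert {u} ((\<lambda>C. C - {u}) ` S - {{}})"

lemma sb_sym: "(a,b) \<in> same_block S \<Longrightarrow> (b,a) \<in> same_block S"
  unfolding same_block_def by blast

lemma sbI: "B \<in> S \<Longrightarrow> a \<in> B \<Longrightarrow> b \<in> B \<Longrightarrow> (a,b) \<in> same_block S"
  unfolding same_block_def by blast

lemma sbE: "(a,b) \<in> same_block S \<Longrightarrow> (\<And>B. B \<in> S \<Longrightarrow> a \<in> B \<Longrightarrow> b \<in> B \<Longrightarrow> P) \<Longrightarrow> P"
  unfolding same_block_def by blast

lemma rt_sym: "(a,b) \<in> (same_block S)\<^sup>* \<Longrightarrow> (b,a) \<in> (same_block S)\<^sup>*"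
proof (induction rule: rtrancl_induct)
  case base then show ?case by (rule rtrancl_refl)
next
  case (step y z)
  have "(z,y) \<in> same_block S" using step.hyps(2) by (rule sb_sym)
  then show ?case using step.IH by (rule converse_rtrancl_into_rtrancl)
qed

lemma rt_in: "(a,b) \<in> (same_block S)\<^sup>* \<Longrightarrow> a \<in> \<Union>S \<Longrightarrow> b \<in> \<Union>S"
proof (induction rule: rtrancl_induct)
  case base then show ?case .
next
  case (step y z)
  from step.hyps(2) obtain B where "B \<in> S" "z \<in> B" by (rule sbE)
  then show ?case by (rule UnionI)
qed

lemma rt_class: "(a,b) \<in> (same_block S)\<^sup>* \<Longrightarrow> (same_block S)\<^sup>* `` {a} = (same_block S)\<^sup>* `` {b}"
proof -
  assume ab: "(a,b) \<in> (same_block S)\<^sup>*"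
  then have ba: "(b,a) \<in> (same_block S)\<^sup>*" by (rule rt_sym)
  show ?thesis
  proof (rule set_eqI)
    fix c
    show "c \<in> (same_block S)\<^sup>* `` {a} \<longleftrightarrow> c \<in> (same_block S)\<^sup>* `` {b}"
    proof
      assume "c \<in> (same_block S)\<^sup>* `` {a}"
      then have "(a,c) \<in> (same_block S)\<^sup>*" by simp
      with ba have "(b,c) \<in> (same_block S)\<^sup>*" by (rule rtrancl_trans)
      then show "c \<in> (same_block S)\<^sup>* `` {b}" by simp
    next
      assume "c \<in> (same_block S)\<^sup>* `` {b}"
      then have "(b,c) \<in> (same_block S)\<^sup>*" by simp
      with ab have "(a,c) \<in> (same_block S)\<^sup>*" by (rule rtrancl_trans)
      then show "c \<in> (same_block S)\<^sup>* `` {a}" by simp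
    qed
  qed
qed

lemma comp_of: "a \<in> \<Union>S \<Longrightarrow> (same_block S)\<^sup>* `` {a} \<in> components S"
  unfolding components_def by (rule quotientI)

lemma compE: "K \<in> components S \<Longrightarrow> (\<And>a. a \<in> \<Union>S \<Longrightarrow> K = (same_block S)\<^sup>* `` {a} \<Longrightarrow> P) \<Longrightarrow> P"
  unfolding components_def by (erule quotientE) blast

lemma comp_in: "K \<in> components S \<Longrightarrow> b \<in> K \<Longrightarrow> b \<in> \<Union>S"
proof -
  assume K: "K \<in> components S" and b: "b \<in> K"
  from K obtain a where a: "a \<in> \<Union>S" "K = (same_block S)\<^sup>* `` {a}" by (rule compE)
  then have "(a,b) \<in> (same_block S)\<^sup>*" using b by simp
  then show ?thesis using a(1) by (rule rt_in)
qed

lemma comp_self: "K \<in> components S \<Longrightarrow> a \<in> K \<Longrightarrow> K = (same_block S)\<^sup>* `` {a}"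
proof -
  assume K: "K \<in> components S" and b: "a \<in> K"
  from K obtain c where c: "c \<in> \<Union>S" "K = (same_block S)\<^sup>* `` {c}" by (rule compE)
  then have "(c,a) \<in> (same_block S)\<^sup>*" using b by simp
  then show ?thesis using c(2) by (simp add: rt_class)
qed

lemma comp_Union: "\<Union>(components S) = \<Union>S"
proof
  show "\<Union>(components S) \<subseteq> \<Union>S"
  proof
    fix b assume "b \<in> \<Union>(components S)"
    then obtain K where "K \<in> components S" "b \<in> K" by (rule UnionE)
    then show "b \<in> \<Union>S" by (rule comp_in)
  qed
  show "\<Union>S \<subseteq> \<Union>(components S)"
  proof
    fix a assume "a \<in> \<Union>S"
    then have "(same_block S)\<^sup>* `` {a} \<in> components S" by (rule comp_of)
    moreover have "a \<in> (same_block S)\<^sup>* `` {a}" by simp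
    ultimately show "a \<in> \<Union>(components S)" by (rule UnionI)
  qed
qed

lemma comp_disj: "K1 \<in> components S \<Longrightarrow> K2 \<in> components S \<Longrightarrow> v \<in> K1 \<Longrightarrow> v \<in> K2 \<Longrightarrow> K1 = K2"
proof -
  assume a: "K1 \<in> components S" "K2 \<in> components S" "v \<in> K1" "v \<in> K2"
  have "K1 = (same_block S)\<^sup>* `` {v}" using a(1,3) by (rule comp_self)
  moreover have "K2 = (same_block S)\<^sup>* `` {v}" using a(2,4) by (rule comp_self)
  ultimately show ?thesis by simp
qed

lemma comp_ne: "K \<in> components S \<Longrightarrow> K \<noteq> {}"
proof -
  assume "K \<in> components S"
  then obtain a where "K = (same_block S)\<^sup>* `` {a}" by (rule compE)
  then have "a \<in> K" by simp
  then show ?thesis by blast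
qed

lemma comp_sub: "K \<in> components S \<Longrightarrow> K \<subseteq> \<Union>S"
proof
  fix b assume "K \<in> components S" "b \<in> K"
  then show "b \<in> \<Union>S" by (rule comp_in)
qed

lemma comp_finite: "finite (\<Union>S) \<Longrightarrow> finite (components S)"
proof -
  assume "finite (\<Union>S)"
  moreover have "components S \<subseteq> Pow (\<Union>S)"
  proof
    fix K assume "K \<in> components S"
    then have "K \<subseteq> \<Union>S" by (rule comp_sub)
    then show "K \<in> Pow (\<Union>S)" by simp
  qed
  moreover have "finite (Pow (\<Union>S))" using calculation(1) by simp
  ultimately show ?thesis by (meson finite_subset)
qed

lemma comp_same: "B \<in> S \<Longrightarrow> a \<in> B \<Longrightarrow> b \<in> B \<Longrightarrow> K \<in> components S \<Longrightarrow> a \<in> K \<Longrightarrow> b \<in> K"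
proof -
  assume B: "B \<in> S" "a \<in> B" "b \<in> B" and K: "K \<in> components S" "a \<in> K"
  have c: "K = (same_block S)\<^sup>* `` {a}" using K by (rule comp_self)
  have "(a,b) \<in> same_block S" using B by (rule sbI)
  then have "(a,b) \<in> (same_block S)\<^sup>*" by (rule r_into_rtrancl)
  then show ?thesis using c by simp
qed

lemma detach_mem: "C' \<in> detach u S \<longleftrightarrow> C' = {u} \<or> (\<exists>C\<in>S. C' = C - {u} \<and> C' \<noteq> {})"
  unfolding detach_def by blast

lemma detach_Union: "u \<in> \<Union>S \<Longrightarrow> \<Union>(detach u S) = \<Union>S"
  unfolding detach_def by blast

lemma detach_memI: "C \<in> S \<Longrightarrow> C - {u} \<noteq> {} \<Longrightarrow> C - {u} \<in> detach u S"
  unfolding detach_def by blast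

lemma ne_emptyI: "a \<in> A \<Longrightarrow> A \<noteq> {}" by auto

lemma detach_components:
  assumes uS: "u \<in> \<Union>S" and uniq: "\<And>B B'. B \<in> S \<Longrightarrow> B' \<in> S \<Longrightarrow> u \<in> B \<Longrightarrow> u \<in> B' \<Longrightarrow> B = B'"
  shows "components (detach u S) = detach u (components S)"
proof -
  let ?S' = "detach u S"
  let ?R = "(same_block S)\<^sup>*"
  let ?R' = "(same_block ?S')\<^sup>*"
  obtain B0 where B0: "B0 \<in> S" "u \<in> B0" using uS by auto
  have U: "\<Union>?S' = \<Union>S" using uS by (rule detach_Union)
  have sb': "same_block ?S' \<subseteq> (same_block S)\<^sup>="
  proof (rule subrelI)
    fix a b assume "(a,b) \<in> same_block ?S'"
    then obtain C' where C': "C' \<in> ?S'" "a \<in> C'" "b \<in> C'" by (rule sbE)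
    from C'(1) show "(a,b) \<in> (same_block S)\<^sup>="
      unfolding detach_mem
    proof
      assume "C' = {u}" then show ?thesis using C' by simp
    next
      assume "\<exists>C\<in>S. C' = C - {u} \<and> C' \<noteq> {}"
      then obtain C where C: "C \<in> S" "C' = C - {u}" by blast
      have "a \<in> C" "b \<in> C" using C C' by auto
      then have "(a,b) \<in> same_block S" using C(1) sbI by metis
      then show ?thesis by simp
    qed
  qed
  have R'R: "?R' \<subseteq> ?R"
    using rtrancl_mono[OF sb'] by simp
  have u_only: "b = u" if "(u,b) \<in> ?R'" for b
    using that
  proof (induction rule: rtrancl_induct)
    case base then show ?case by simp
  next
    case (step y z)
    then have yu: "y = u" by simp
    from step.hyps(2) obtain C' where C': "C' \<in> ?S'" "y \<in> C'" "z \<in> C'" by (rule sbE)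
    from C'(1) show ?case
      unfolding detach_mem
    proof
      assume "C' = {u}" then show ?thesis using C' by simp
    next
      assume "\<exists>C\<in>S. C' = C - {u} \<and> C' \<noteq> {}"
      then obtain C where "C' = C - {u}" by blast
      then show ?thesis using C' yu by simp
    qed
  qed
  have main: "(b \<noteq> u \<longrightarrow> (a,b) \<in> ?R') \<and> (b = u \<longrightarrow> (\<exists>c\<in>B0-{u}. (a,c) \<in> ?R'))"
    if "(a,b) \<in> ?R" "a \<noteq> u" for a b
    using that
  proof (induction rule: rtrancl_induct)
    case base then show ?case by simp
  next
    case (step y z)
    from step.hyps(2) obtain C where C: "C \<in> S" "y \<in> C" "z \<in> C" by (rule sbE)
    show ?case
    proof (cases "y = u")
      case True
      then have CB: "C = B0" using uniq[of C B0] C B0 by simp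
      from True step.IH step.prems obtain c where c: "c \<in> B0 - {u}" "(a,c) \<in> ?R'" by auto
      show ?thesis
      proof (cases "z = u")
        case True then show ?thesis using c by auto
      next
        case False
        have "B0 - {u} \<noteq> {}" using c by auto
        with B0(1) have "B0 - {u} \<in> ?S'" by (rule detach_memI)
        moreover have "c \<in> B0 - {u}" "z \<in> B0 - {u}" using c C CB False by auto
        ultimately have "(c,z) \<in> same_block ?S'" by (rule sbI)
        with c(2) have "(a,z) \<in> ?R'" by (rule rtrancl_into_rtrancl)
        then show ?thesis using False by simp
      qed
    next
      case False
      then have ay: "(a,y) \<in> ?R'" using step by auto
      show ?thesis
      proof (cases "z = u")
        case True
        then have "C = B0" using uniq[of C B0] C B0 by simp
        then have "y \<in> B0 - {u}" using C False by simp
        then show ?thesis using ay True by auto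
      next
        case zu: False
        have "C - {u} \<noteq> {}" using C False by auto
        with C(1) have "C - {u} \<in> ?S'" by (rule detach_memI)
        moreover have "y \<in> C - {u}" "z \<in> C - {u}" using C False zu by auto
        ultimately have "(y,z) \<in> same_block ?S'" by (rule sbI)
        with ay have "(a,z) \<in> ?R'" by (rule rtrancl_into_rtrancl)
        then show ?thesis using zu by simp
      qed
    qed
  qed
  have clu: "?R' `` {u} = {u}" using u_only by auto
  have cla: "?R' `` {a} = ?R `` {a} - {u}" if "a \<noteq> u" for a
  proof
    show "?R' `` {a} \<subseteq> ?R `` {a} - {u}"
    proof
      fix b assume "b \<in> ?R' `` {a}"
      then have ab: "(a,b) \<in> ?R'" by simp
      have "b \<noteq> u"
      proof
        assume "b = u"
        then have "(u,a) \<in> ?R'" using ab rt_sym by metis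
        then have "a = u" by (rule u_only)
        then show False using that by simp
      qed
      moreover have "(a,b) \<in> ?R" using R'R ab by (rule subsetD)
      ultimately show "b \<in> ?R `` {a} - {u}" by simp
    qed
  next
    show "?R `` {a} - {u} \<subseteq> ?R' `` {a}"
    proof
      fix b assume "b \<in> ?R `` {a} - {u}"
      then have "(a,b) \<in> ?R" "b \<noteq> u" by auto
      then have "(a,b) \<in> ?R'" using main that by simp
      then show "b \<in> ?R' `` {a}" by simp
    qed
  qed
  show ?thesis
  proof
    show "components ?S' \<subseteq> detach u (components S)"
    proof
      fix K assume "K \<in> components ?S'"
      then obtain a where a0: "a \<in> \<Union>?S'" "K = ?R' `` {a}" by (rule compE)
      then have a: "a \<in> \<Union>S" "K = ?R' `` {a}" using U by simp_all
      show "K \<in> detach u (components S)"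
      proof (cases "a = u")
        case True then show ?thesis using a clu by (simp add: detach_def)
      next
        case False
        then have Ka: "K = ?R `` {a} - {u}" using a cla by simp
        have "?R `` {a} \<in> components S" using a(1) by (rule comp_of)
        moreover have "a \<in> ?R `` {a} - {u}" using False by simp
        then have "?R `` {a} - {u} \<noteq> {}" by (rule ne_emptyI)
        ultimately have "?R `` {a} - {u} \<in> detach u (components S)" by (rule detach_memI)
        then show ?thesis using Ka by simp
      qed
    qed
  next
    show "detach u (components S) \<subseteq> components ?S'"
    proof
      fix K assume K: "K \<in> detach u (components S)"
      show "K \<in> components ?S'"
      proof (cases "K = {u}")
        case True
        have "?R' `` {u} \<in> components ?S'" using uS U by (simp add: comp_of)
        then show ?thesis using clu True by simp
      next
        case False
        then obtain C where C: "C \<in> components S" "K = C - {u}" "K \<noteq> {}"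
          using K unfolding detach_mem by auto
        from C(1) obtain a where a: "a \<in> \<Union>S" "C = ?R `` {a}" by (rule compE)
        obtain b where b: "b \<in> K" using C by auto
        then have ab: "(a,b) \<in> ?R" "b \<noteq> u" using C a by auto
        then have bS: "b \<in> \<Union>S" using rt_in a by metis
        have "K = ?R `` {b} - {u}" using C a rt_class[OF ab(1)] by simp
        then have "K = ?R' `` {b}" using cla ab by simp
        moreover have "?R' `` {b} \<in> components ?S'" using bS U by (simp add: comp_of)
        ultimately show ?thesis by simp
      qed
    qed
  qed
qed



definition cmp :: "(int \<times> nat) set set \<Rightarrow> int set set" where
  "cmp Cs = {fst ` (C \<inter> Collect outer) | C. C \<in> Cs \<and> (\<exists>u\<in>C. outer u)}"

definition mids :: "(int \<times> nat) set set \<Rightarrow> (int \<times> nat) set set" where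
  "mids Cs = {C \<in> Cs. \<forall>v\<in>C. \<not> outer v}"

lemma compose_cmp: "compose d1 d2 = cmp (components (stack d1 d2))"
  unfolding compose_def cmp_def ..

lemma nmid_mids: "nmid d1 d2 = card (mids (components (stack d1 d2)))"
  unfolding nmid_def mids_def ..

lemma cmp_mem: "E \<in> cmp Cs \<longleftrightarrow> (\<exists>C\<in>Cs. (\<exists>u\<in>C. outer u) \<and> E = fst ` (C \<inter> Collect outer))"
  unfolding cmp_def by blast

lemma cmp_detach:
  assumes inj: "\<And>v w. v \<in> \<Union>Cs \<Longrightarrow> w \<in> \<Union>Cs \<Longrightarrow> outer v \<Longrightarrow> outer w \<Longrightarrow> fst v = fst w \<Longrightarrow> v = w"
    and ux: "ux \<in> \<Union>Cs" "outer ux"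
  shows "cmp (detach ux Cs) = detach (fst ux) (cmp Cs)"
proof -
  have key: "fst ` ((C - {ux}) \<inter> Collect outer) = fst ` (C \<inter> Collect outer) - {fst ux}" if C: "C \<in> Cs" for C
  proof
    show "fst ` ((C - {ux}) \<inter> Collect outer) \<subseteq> fst ` (C \<inter> Collect outer) - {fst ux}"
    proof
      fix i assume "i \<in> fst ` ((C - {ux}) \<inter> Collect outer)"
      then obtain w where w: "w \<in> C" "w \<noteq> ux" "outer w" "i = fst w" by auto
      have wU: "w \<in> \<Union>Cs" using C w(1) by (rule UnionI)
      have "fst w \<noteq> fst ux"
      proof
        assume "fst w = fst ux"
        then have "w = ux" using inj[OF wU ux(1) w(3) ux(2)] by simp
        then show False using w(2) by simp
      qed
      then show "i \<in> fst ` (C \<inter> Collect outer) - {fst ux}" using w by auto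
    qed
    show "fst ` (C \<inter> Collect outer) - {fst ux} \<subseteq> fst ` ((C - {ux}) \<inter> Collect outer)" by auto
  qed
  show ?thesis
  proof
    show "cmp (detach ux Cs) \<subseteq> detach (fst ux) (cmp Cs)"
    proof
      fix E assume "E \<in> cmp (detach ux Cs)"
      then obtain C' where C': "C' \<in> detach ux Cs" "\<exists>u\<in>C'. outer u" "E = fst ` (C' \<inter> Collect outer)"
        unfolding cmp_mem by blast
      from C'(1) consider "C' = {ux}" | C where "C \<in> Cs" "C' = C - {ux}" "C' \<noteq> {}"
        unfolding detach_mem by blast
      then show "E \<in> detach (fst ux) (cmp Cs)"
      proof cases
        case 1 then have "E = {fst ux}" using C' ux by auto
        then show ?thesis by (simp add: detach_def)
      next
        case (2 C)
        then have E: "E = fst ` (C \<inter> Collect outer) - {fst ux}" using C' key by simp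
        obtain v where v: "v \<in> C'" "outer v" using C'(2) by blast
        have vC: "v \<in> C" using 2 v by simp
        have F: "fst ` (C \<inter> Collect outer) \<in> cmp Cs" unfolding cmp_mem
          by (rule bexI[of _ C]) (use vC v(2) 2(1) in auto)
        have "fst v \<in> E" using C'(3) v by auto
        then have "E \<noteq> {}" by (rule ne_emptyI)
        then have "fst ` (C \<inter> Collect outer) - {fst ux} \<noteq> {}" using E by simp
        with F have "fst ` (C \<inter> Collect outer) - {fst ux} \<in> detach (fst ux) (cmp Cs)"
          by (rule detach_memI)
        then show ?thesis using E by simp
      qed
    qed
    show "detach (fst ux) (cmp Cs) \<subseteq> cmp (detach ux Cs)"
    proof
      fix E assume "E \<in> detach (fst ux) (cmp Cs)"
      then consider "E = {fst ux}" | F where "F \<in> cmp Cs" "E = F - {fst ux}" "E \<noteq> {}"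
        unfolding detach_mem by blast
      then show "E \<in> cmp (detach ux Cs)"
      proof cases
        case 1
        have "{ux} \<in> detach ux Cs" by (simp add: detach_def)
        moreover have "E = fst ` ({ux} \<inter> Collect outer)" using 1 ux by auto
        ultimately show ?thesis unfolding cmp_mem
          by (intro bexI[of _ "{ux}"]) (use ux in auto)
      next
        case (2 F)
        then obtain C where C: "C \<in> Cs" "F = fst ` (C \<inter> Collect outer)" unfolding cmp_mem by blast
        have E: "E = fst ` ((C - {ux}) \<inter> Collect outer)" using 2 C key by simp
        obtain i where "i \<in> E" using 2 by blast
        then obtain v where v: "v \<in> C - {ux}" "outer v" using E by auto
        have "C - {ux} \<noteq> {}" using v(1) by (rule ne_emptyI)
        with C(1) have "C - {ux} \<in> detach ux Cs" by (rule detach_memI)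
        then show ?thesis unfolding cmp_mem
          by (rule bexI[rotated]) (use v E in auto)
      qed
    qed
  qed
qed

lemma mids_detach:
  assumes fin: "finite Cs"
    and disj: "\<And>C C' v. C \<in> Cs \<Longrightarrow> C' \<in> Cs \<Longrightarrow> v \<in> C \<Longrightarrow> v \<in> C' \<Longrightarrow> C = C'"
    and ne: "{} \<notin> Cs" and K: "K \<in> Cs" "ux \<in> K" "K \<noteq> {ux}" and oux: "outer ux"
  shows "card (mids (detach ux Cs)) = card (mids Cs) + (if \<forall>v\<in>K-{ux}. \<not> outer v then 1 else 0)"
proof -
  have Kne: "K - {ux} \<noteq> {}" using K by auto
  have notin: "K - {ux} \<notin> mids Cs"
  proof
    assume "K - {ux} \<in> mids Cs"
    then have KC: "K - {ux} \<in> Cs" by (simp add: mids_def)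
    obtain v where v: "v \<in> K - {ux}" using Kne by auto
    then have "v \<in> K" by simp
    have "K - {ux} = K" using disj[OF KC K(1) v \<open>v \<in> K\<close>] .
    then show False using K(2) by auto
  qed
  have eq: "mids (detach ux Cs) = mids Cs \<union> (if \<forall>v\<in>K-{ux}. \<not> outer v then {K - {ux}} else {})"
  proof (rule set_eqI)
    fix C'
    show "C' \<in> mids (detach ux Cs) \<longleftrightarrow> C' \<in> mids Cs \<union> (if \<forall>v\<in>K-{ux}. \<not> outer v then {K - {ux}} else {})"
    proof
      assume a: "C' \<in> mids (detach ux Cs)"
      then have C'1: "C' \<in> detach ux Cs" and C'2: "\<forall>v\<in>C'. \<not> outer v" by (simp_all add: mids_def)
      from C'1 consider "C' = {ux}" | C where "C \<in> Cs" "C' = C - {ux}" "C' \<noteq> {}"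
        unfolding detach_mem by blast
      then show "C' \<in> mids Cs \<union> (if \<forall>v\<in>K-{ux}. \<not> outer v then {K - {ux}} else {})"
      proof cases
        case 1 then show ?thesis using C'2 oux by simp
      next
        case (2 C)
        show ?thesis
        proof (cases "ux \<in> C")
          case True
          have "C = K" by (rule disj[OF 2(1) K(1) True K(2)])
          then show ?thesis using 2 C'2 by simp
        next
          case False
          then have "C' = C" using 2 by simp
          then show ?thesis using 2 C'2 by (simp add: mids_def)
        qed
      qed
    next
      assume "C' \<in> mids Cs \<union> (if \<forall>v\<in>K-{ux}. \<not> outer v then {K - {ux}} else {})"
      then consider "C' \<in> mids Cs" | "C' = K - {ux}" "\<forall>v\<in>K-{ux}. \<not> outer v"
        by (auto split: if_splits)
      then show "C' \<in> mids (detach ux Cs)"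
      proof cases
        case 1
        then have C: "C' \<in> Cs" "\<forall>v\<in>C'. \<not> outer v" by (simp_all add: mids_def)
        then have "ux \<notin> C'" using oux by auto
        then have e: "C' - {ux} = C'" by simp
        moreover have "C' \<noteq> {}" using ne C(1) by auto
        ultimately have "C' - {ux} \<in> detach ux Cs" using detach_memI[OF C(1), of ux] by simp
        then show ?thesis using C(2) e by (simp add: mids_def)
      next
        case 2
        have "K - {ux} \<in> detach ux Cs" using K(1) Kne by (rule detach_memI)
        then show ?thesis using 2 by (simp add: mids_def)
      qed
    qed
  qed
  have finm: "finite (mids Cs)" using fin by (simp add: mids_def)
  show ?thesis
  proof (cases "\<forall>v\<in>K-{ux}. \<not> outer v")
    case True
    then show ?thesis using eq notin finm by simp
  next
    case False then show ?thesis using eq unfolding if_not_P[OF False] by simp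
  qed
qed

lemma cmp_single:
  assumes inj: "\<And>v w. v \<in> \<Union>Cs \<Longrightarrow> w \<in> \<Union>Cs \<Longrightarrow> outer v \<Longrightarrow> outer w \<Longrightarrow> fst v = fst w \<Longrightarrow> v = w"
    and disj: "\<And>C C' v. C \<in> Cs \<Longrightarrow> C' \<in> Cs \<Longrightarrow> v \<in> C \<Longrightarrow> v \<in> C' \<Longrightarrow> C = C'"
    and K: "K \<in> Cs" "ux \<in> K" and oux: "outer ux"
  shows "{fst ux} \<in> cmp Cs \<longleftrightarrow> (\<forall>v\<in>K-{ux}. \<not> outer v)"
proof
  have uxU: "ux \<in> \<Union>Cs" using K(1) K(2) by (rule UnionI)
  assume "{fst ux} \<in> cmp Cs"
  then obtain C where C: "C \<in> Cs" "{fst ux} = fst ` (C \<inter> Collect outer)" unfolding cmp_mem by blast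
  have "fst ux \<in> fst ` (C \<inter> Collect outer)" using C(2) by (metis insertI1)
  then obtain w where w: "w \<in> C" "outer w" "fst w = fst ux" by auto
  have wU: "w \<in> \<Union>Cs" using C(1) w(1) by (rule UnionI)
  have "w = ux" using inj[OF wU uxU w(2) oux w(3)] .
  then have CK: "C = K" using disj[OF C(1) K(1)] w(1) K(2) by simp
  show "\<forall>v\<in>K-{ux}. \<not> outer v"
  proof (intro ballI notI)
    fix v assume v: "v \<in> K - {ux}" "outer v"
    then have "fst v \<in> fst ` (C \<inter> Collect outer)" using CK by auto
    then have fv: "fst v = fst ux" using C(2) by (metis singletonD)
    have vU: "v \<in> \<Union>Cs" using K(1) v(1) by auto
    have "v = ux" using inj[OF vU uxU v(2) oux fv] .
    then show False using v by simp
  qed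
next
  assume a: "\<forall>v\<in>K-{ux}. \<not> outer v"
  have "K \<inter> Collect outer = {ux}" using a K(2) oux by auto
  then have "{fst ux} = fst ` (K \<inter> Collect outer)" by simp
  then show "{fst ux} \<in> cmp Cs" unfolding cmp_mem using K oux by blast
qed

lemma cmp_partition:
  assumes inj: "\<And>v w. v \<in> \<Union>Cs \<Longrightarrow> w \<in> \<Union>Cs \<Longrightarrow> outer v \<Longrightarrow> outer w \<Longrightarrow> fst v = fst w \<Longrightarrow> v = w"
    and disj: "\<And>C C' v. C \<in> Cs \<Longrightarrow> C' \<in> Cs \<Longrightarrow> v \<in> C \<Longrightarrow> v \<in> C' \<Longrightarrow> C = C'"
    and A: "fst ` (\<Union>Cs \<inter> Collect outer) = A"
  shows "partition_on A (cmp Cs)"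
proof (rule partition_onI)
  show "\<Union>(cmp Cs) = A"
  proof
    show "\<Union>(cmp Cs) \<subseteq> A"
    proof
      fix i assume "i \<in> \<Union>(cmp Cs)"
      then obtain E where E: "E \<in> cmp Cs" "i \<in> E" by (rule UnionE)
      then obtain C where C: "C \<in> Cs" "E = fst ` (C \<inter> Collect outer)" unfolding cmp_mem by blast
      then obtain w where w: "w \<in> C" "outer w" "i = fst w" using E(2) by auto
      have "w \<in> \<Union>Cs" using C(1) w(1) by (rule UnionI)
      then have "i \<in> fst ` (\<Union>Cs \<inter> Collect outer)" using w by auto
      then show "i \<in> A" using A by simp
    qed
    show "A \<subseteq> \<Union>(cmp Cs)"
    proof
      fix i assume "i \<in> A"
      then have "i \<in> fst ` (\<Union>Cs \<inter> Collect outer)" using A by simp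
      then obtain w where w0: "w \<in> \<Union>Cs" "outer w" "i = fst w" by auto
      then obtain C where w: "C \<in> Cs" "w \<in> C" by (auto elim: UnionE)
      have "fst ` (C \<inter> Collect outer) \<in> cmp Cs" unfolding cmp_mem using w w0 by blast
      moreover have "i \<in> fst ` (C \<inter> Collect outer)" using w w0 by auto
      ultimately show "i \<in> \<Union>(cmp Cs)" by (rule UnionI)
    qed
  qed
next
  fix p q assume p: "p \<in> cmp Cs" and q: "q \<in> cmp Cs" and pq: "p \<noteq> q"
  from p obtain C1 where C1: "C1 \<in> Cs" "p = fst ` (C1 \<inter> Collect outer)" unfolding cmp_mem by blast
  from q obtain C2 where C2: "C2 \<in> Cs" "q = fst ` (C2 \<inter> Collect outer)" unfolding cmp_mem by blast
  show "disjnt p q"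
    unfolding disjnt_def
  proof (rule ccontr)
    assume "p \<inter> q \<noteq> {}"
    then obtain i where "i \<in> p" "i \<in> q" by auto
    then obtain w1 w2 where w: "w1 \<in> C1" "outer w1" "i = fst w1" "w2 \<in> C2" "outer w2" "i = fst w2"
      using C1 C2 by auto
    have w1U: "w1 \<in> \<Union>Cs" using C1(1) w(1) by (rule UnionI)
    have w2U: "w2 \<in> \<Union>Cs" using C2(1) w(4) by (rule UnionI)
    have "w1 = w2" using inj[OF w1U w2U w(2) w(5)] w by simp
    then have "C1 = C2" using disj[OF C1(1) C2(1) w(1)] w(4) by simp
    then show False using pq C1 C2 by simp
  qed
next
  show "{} \<notin> cmp Cs"
  proof
    assume "{} \<in> cmp Cs"
    then obtain C where C: "C \<in> Cs" "\<exists>u\<in>C. outer u" "{} = fst ` (C \<inter> Collect outer)"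
      unfolding cmp_mem by blast
    then show False by auto
  qed
qed



definition f1 :: "int \<Rightarrow> int \<times> nat" where "f1 i = (if i < 0 then (i, 0) else (i, 1))"
definition f2 :: "int \<Rightarrow> int \<times> nat" where "f2 i = (if i < 0 then (- i, 1) else (i, 2))"

lemma tag1_eq: "tag1 B = f1 ` B" unfolding tag1_def f1_def ..
lemma tag2_eq: "tag2 B = f2 ` B" unfolding tag2_def f2_def ..

lemma inj_f2: "inj f2"
  unfolding inj_def f2_def by (auto split: if_splits)

lemma f2_ux: "f2 j = (i, 2) \<longleftrightarrow> j = i \<and> i \<ge> 0"
  unfolding f2_def by auto

lemma f1_not2: "snd (f1 j) \<noteq> 2"
  unfolding f1_def by auto

definition good :: "int \<times> nat \<Rightarrow> bool" where
  "good v \<longleftrightarrow> (snd v = 0 \<and> fst v < 0) \<or> snd v = 1 \<or> (snd v = 2 \<and> fst v \<ge> 0)"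

lemma good_f1: "good (f1 i)" unfolding good_def f1_def by auto
lemma good_f2: "good (f2 i)" unfolding good_def f2_def by auto

lemma good_inj: "good v \<Longrightarrow> good w \<Longrightarrow> outer v \<Longrightarrow> outer w \<Longrightarrow> fst v = fst w \<Longrightarrow> v = w"
  unfolding good_def outer_def by (cases v, cases w) auto

lemma outer_f1: "outer (f1 i) \<longleftrightarrow> i < 0" unfolding outer_def f1_def by auto
lemma outer_f2: "outer (f2 i) \<longleftrightarrow> i \<ge> 0" unfolding outer_def f2_def by auto
lemma fst_f1: "fst (f1 i) = i" unfolding f1_def by auto
lemma fst_f2_pos: "i \<ge> 0 \<Longrightarrow> fst (f2 i) = i" unfolding f2_def by auto

lemma finite_nodes: "finite (nodes n)" unfolding nodes_def by simp

lemma zero_notin_nodes: "0 \<notin> nodes n" unfolding nodes_def by auto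

lemma diag_Union: "d \<in> diagrams n \<Longrightarrow> \<Union>d = nodes n"
  unfolding diagrams_def partition_on_def by simp

lemma diag_ne: "d \<in> diagrams n \<Longrightarrow> {} \<notin> d"
  unfolding diagrams_def partition_on_def by simp

lemma diag_disj: "d \<in> diagrams n \<Longrightarrow> B \<in> d \<Longrightarrow> B' \<in> d \<Longrightarrow> j \<in> B \<Longrightarrow> j \<in> B' \<Longrightarrow> B = B'"
  unfolding diagrams_def partition_on_def disjoint_def by blast

lemma diag_finite: "d \<in> diagrams n \<Longrightarrow> finite (\<Union>d)"
  using diag_Union finite_nodes by metis

lemma diagrams_finite: "finite (diagrams n)"
proof -
  have "diagrams n \<subseteq> Pow (Pow (nodes n))"
  proof
    fix d assume "d \<in> diagrams n"
    then have "\<Union>d = nodes n" by (rule diag_Union)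
    then show "d \<in> Pow (Pow (nodes n))" by auto
  qed
  moreover have "finite (Pow (Pow (nodes n)))" using finite_nodes by simp
  ultimately show ?thesis by (rule finite_subset)
qed

lemma stack_Union: "\<Union>(stack d1 d2) = f1 ` (\<Union>d1) \<union> f2 ` (\<Union>d2)"
  unfolding stack_def tag1_eq tag2_eq by auto

lemma stack_good: "v \<in> \<Union>(stack d1 d2) \<Longrightarrow> good v"
  unfolding stack_Union using good_f1 good_f2 by auto

lemma stack_inj: "v \<in> \<Union>(stack d1 d2) \<Longrightarrow> w \<in> \<Union>(stack d1 d2) \<Longrightarrow> outer v \<Longrightarrow> outer w \<Longrightarrow> fst v = fst w \<Longrightarrow> v = w"
  using stack_good good_inj by metis

lemma stack_fst: 
  assumes "d1 \<in> diagrams n" "d2 \<in> diagrams n"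
  shows "fst ` (\<Union>(stack d1 d2) \<inter> Collect outer) = nodes n"
proof -
  have U: "\<Union>(stack d1 d2) = f1 ` nodes n \<union> f2 ` nodes n"
    using assms by (simp add: stack_Union diag_Union)
  show ?thesis
  proof
    show "fst ` (\<Union>(stack d1 d2) \<inter> Collect outer) \<subseteq> nodes n"
      unfolding U using outer_f1 outer_f2 fst_f1 fst_f2_pos by auto
    show "nodes n \<subseteq> fst ` (\<Union>(stack d1 d2) \<inter> Collect outer)"
    proof
      fix i assume i: "i \<in> nodes n"
      show "i \<in> fst ` (\<Union>(stack d1 d2) \<inter> Collect outer)"
      proof (cases "i < 0")
        case True
        then have "f1 i \<in> \<Union>(stack d1 d2) \<inter> Collect outer" using i U outer_f1 by auto
        then show ?thesis using fst_f1 by (metis image_eqI)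
      next
        case False
        then have "f2 i \<in> \<Union>(stack d1 d2) \<inter> Collect outer" using i U outer_f2 by auto
        then show ?thesis using fst_f2_pos False by (metis image_eqI linorder_not_less)
      qed
    qed
  qed
qed

lemma stack_finite: "d1 \<in> diagrams n \<Longrightarrow> d2 \<in> diagrams n \<Longrightarrow> finite (\<Union>(stack d1 d2))"
  by (simp add: stack_Union diag_finite)

lemma compose_diag:
  assumes "d1 \<in> diagrams n" "d2 \<in> diagrams n"
  shows "compose d1 d2 \<in> diagrams n"
proof -
  let ?Cs = "components (stack d1 d2)"
  have "partition_on (nodes n) (cmp ?Cs)"
  proof (rule cmp_partition)
    show "\<And>v w. v \<in> \<Union>?Cs \<Longrightarrow> w \<in> \<Union>?Cs \<Longrightarrow> outer v \<Longrightarrow> outer w \<Longrightarrow> fst v = fst w \<Longrightarrow> v = w"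
      unfolding comp_Union by (rule stack_inj)
    show "\<And>C C' v. C \<in> ?Cs \<Longrightarrow> C' \<in> ?Cs \<Longrightarrow> v \<in> C \<Longrightarrow> v \<in> C' \<Longrightarrow> C = C'"
      by (rule comp_disj)
    show "fst ` (\<Union>?Cs \<inter> Collect outer) = nodes n"
      unfolding comp_Union using assms by (rule stack_fst)
  qed
  then show ?thesis unfolding compose_cmp diagrams_def by simp
qed

lemma stack_detach:
  assumes d1: "d1 \<in> diagrams n" and i: "i > 0"
  shows "stack d1 (detach i d2) = detach (i, 2) (stack d1 d2)"
proof -
  let ?ux = "(i, 2::nat)"
  have t2i: "tag2 {i} = {?ux}" unfolding tag2_eq f2_def using i by simp
  have t2d: "tag2 (B - {i}) = tag2 B - {?ux}" for B
  proof -
    have "f2 ` (B - {i}) = f2 ` B - f2 ` {i}" using inj_f2 by (rule image_set_diff)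
    moreover have "f2 i = ?ux" unfolding f2_def using i by simp
    ultimately show ?thesis unfolding tag2_eq by simp
  qed
  have t2e: "tag2 B = {} \<longleftrightarrow> B = {}" for B unfolding tag2_eq by simp
  have t1d: "tag1 B - {?ux} = tag1 B" for B
    unfolding tag1_eq using f1_not2 by (auto simp: image_iff) (metis snd_conv)
  have t1e: "tag1 B \<noteq> {}" if "B \<in> d1" for B
    using diag_ne[OF d1] that unfolding tag1_eq by auto
  show ?thesis
  proof (rule set_eqI)
    fix X
    show "X \<in> stack d1 (detach i d2) \<longleftrightarrow> X \<in> detach ?ux (stack d1 d2)"
    proof
      assume "X \<in> stack d1 (detach i d2)"
      then consider B where "B \<in> d1" "X = tag1 B" | C where "C \<in> detach i d2" "X = tag2 C"
        unfolding stack_def by blast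
      then show "X \<in> detach ?ux (stack d1 d2)"
      proof cases
        case (1 B)
        then have "tag1 B \<in> stack d1 d2" unfolding stack_def by simp
        moreover have "tag1 B - {?ux} \<noteq> {}" using t1d t1e 1 by simp
        ultimately have "tag1 B - {?ux} \<in> detach ?ux (stack d1 d2)" by (rule detach_memI)
        then show ?thesis using 1 t1d by simp
      next
        case (2 C)
        from 2(1) consider "C = {i}" | B where "B \<in> d2" "C = B - {i}" "C \<noteq> {}"
          unfolding detach_mem by blast
        then show ?thesis
        proof cases
          case 1 then show ?thesis using 2 t2i by (simp add: detach_def)
        next
          case (2 B)
          then have "tag2 B \<in> stack d1 d2" unfolding stack_def by simp
          moreover have "tag2 B - {?ux} \<noteq> {}" using 2 t2d t2e by metis
          ultimately have "tag2 B - {?ux} \<in> detach ?ux (stack d1 d2)" by (rule detach_memI)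
          then show ?thesis using 2 \<open>X = tag2 C\<close> t2d by simp
        qed
      qed
    next
      assume "X \<in> detach ?ux (stack d1 d2)"
      then consider "X = {?ux}" | Y where "Y \<in> stack d1 d2" "X = Y - {?ux}" "X \<noteq> {}"
        unfolding detach_mem by blast
      then show "X \<in> stack d1 (detach i d2)"
      proof cases
        case 1
        have "{i} \<in> detach i d2" by (simp add: detach_def)
        then have "tag2 {i} \<in> stack d1 (detach i d2)" unfolding stack_def by simp
        then show ?thesis using 1 t2i by simp
      next
        case (2 Y)
        from 2(1) consider B where "B \<in> d1" "Y = tag1 B" | B where "B \<in> d2" "Y = tag2 B"
          unfolding stack_def by blast
        then show ?thesis
        proof cases
          case (1 B)
          then have "X = tag1 B" using 2 t1d by simp
          then show ?thesis using 1 unfolding stack_def by simp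
        next
          case (2 B)
          have XB: "X = tag2 (B - {i})" using 2 \<open>X = Y - {?ux}\<close> t2d by simp
          then have "B - {i} \<noteq> {}" using \<open>X \<noteq> {}\<close> t2e by metis
          with 2(1) have "B - {i} \<in> detach i d2" by (rule detach_memI)
          then show ?thesis using XB unfolding stack_def by simp
        qed
      qed
    qed
  qed
qed

lemma stack_ux:
  assumes d2: "d2 \<in> diagrams n" and i: "i > 0" "i \<in> nodes n"
  shows "(i,2) \<in> \<Union>(stack d1 d2)"
    and "\<And>X Y. X \<in> stack d1 d2 \<Longrightarrow> Y \<in> stack d1 d2 \<Longrightarrow> (i,2) \<in> X \<Longrightarrow> (i,2) \<in> Y \<Longrightarrow> X = Y"
proof -
  have "i \<in> \<Union>d2" using d2 i by (simp add: diag_Union)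
  then have "f2 i \<in> f2 ` \<Union>d2" by simp
  moreover have "f2 i = (i,2)" unfolding f2_def using i by simp
  ultimately show "(i,2) \<in> \<Union>(stack d1 d2)" unfolding stack_Union by simp
  have blk: "\<exists>B\<in>d2. X = tag2 B \<and> i \<in> B" if "X \<in> stack d1 d2" "(i,2) \<in> X" for X
  proof -
    from that(1) consider B where "B \<in> d1" "X = tag1 B" | B where "B \<in> d2" "X = tag2 B"
      unfolding stack_def by blast
    then show ?thesis
    proof cases
      case (1 B)
      then have "(i,2) \<in> f1 ` B" using that(2) tag1_eq by simp
      then show ?thesis using f1_not2 by (metis image_iff snd_conv)
    next
      case (2 B)
      then have "(i,2) \<in> f2 ` B" using that(2) tag2_eq by simp
      then have "i \<in> B" using f2_ux by (metis image_iff)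
      then show ?thesis using 2 by blast
    qed
  qed
  fix X Y assume XY: "X \<in> stack d1 d2" "Y \<in> stack d1 d2" "(i,2) \<in> X" "(i,2) \<in> Y"
  obtain B where B: "B \<in> d2" "X = tag2 B" "i \<in> B" using blk XY(1,3) by blast
  obtain B' where B': "B' \<in> d2" "Y = tag2 B'" "i \<in> B'" using blk XY(2,4) by blast
  have "B = B'" using diag_disj[OF d2 B(1) B'(1) B(3) B'(3)] .
  then show "X = Y" using B B' by simp
qed



lemma compose_detach:
  assumes d1: "d1 \<in> diagrams n" and d2: "d2 \<in> diagrams n" and i: "i > 0" "i \<in> nodes n"
  shows "compose d1 (detach i d2) = detach i (compose d1 d2)"
proof -
  let ?S = "stack d1 d2"
  let ?Cs = "components ?S"
  have e1: "components (detach (i,2) ?S) = detach (i,2) ?Cs"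
    using stack_ux[OF d2 i] by (rule detach_components)
  have e2: "cmp (detach (i,2) ?Cs) = detach (fst (i,2::nat)) (cmp ?Cs)"
  proof (rule cmp_detach)
    show "\<And>v w. v \<in> \<Union>?Cs \<Longrightarrow> w \<in> \<Union>?Cs \<Longrightarrow> outer v \<Longrightarrow> outer w \<Longrightarrow> fst v = fst w \<Longrightarrow> v = w"
      unfolding comp_Union by (rule stack_inj)
    show "(i,2) \<in> \<Union>?Cs" unfolding comp_Union using stack_ux(1)[OF d2 i] .
    show "outer (i,2)" unfolding outer_def by simp
  qed
  show ?thesis unfolding compose_cmp stack_detach[OF d1 i(1)] e1 e2 by simp
qed

lemma detach_self:
  assumes d: "d \<in> diagrams n" and s: "{i} \<in> d"
  shows "detach i d = d"
proof (rule set_eqI)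
  fix X
  show "X \<in> detach i d \<longleftrightarrow> X \<in> d"
  proof
    assume "X \<in> detach i d"
    then consider "X = {i}" | B where "B \<in> d" "X = B - {i}" "X \<noteq> {}"
      unfolding detach_mem by blast
    then show "X \<in> d"
    proof cases
      case 1 then show ?thesis using s by simp
    next
      case (2 B)
      show ?thesis
      proof (cases "i \<in> B")
        case True
        then have "B = {i}" using diag_disj[OF d 2(1) s True] by simp
        then show ?thesis using 2 by simp
      next
        case False then show ?thesis using 2 by simp
      qed
    qed
  next
    assume X: "X \<in> d"
    show "X \<in> detach i d"
    proof (cases "i \<in> X")
      case True
      then have "X = {i}" using diag_disj[OF d X s True] by simp
      then show ?thesis by (simp add: detach_def)
    next
      case False
      then have "X - {i} = X" by simp
      moreover have "X \<noteq> {}" using diag_ne[OF d] X by auto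
      ultimately show ?thesis using detach_memI[OF X, of i] by simp
    qed
  qed
qed

lemma single_compose:
  assumes d1: "d1 \<in> diagrams n" and d2: "d2 \<in> diagrams n" and i: "i > 0" "i \<in> nodes n"
    and s: "{i} \<in> d2"
  shows "{i} \<in> compose d1 d2"
proof -
  have "compose d1 d2 = compose d1 (detach i d2)" using detach_self[OF d2 s] by simp
  also have "... = detach i (compose d1 d2)" by (rule compose_detach[OF d1 d2 i])
  finally have "compose d1 d2 = detach i (compose d1 d2)" .
  moreover have "{i} \<in> detach i (compose d1 d2)" by (simp add: detach_def)
  ultimately show ?thesis by simp
qed

lemma nmid_detach:
  assumes d1: "d1 \<in> diagrams n" and d2: "d2 \<in> diagrams n" and i: "i > 0" "i \<in> nodes n"
    and ns: "{i} \<notin> d2"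
  shows "nmid d1 (detach i d2) = nmid d1 d2 + (if {i} \<in> compose d1 d2 then 1 else 0)"
proof -
  let ?S = "stack d1 d2"
  let ?Cs = "components ?S"
  let ?ux = "(i, 2::nat)"
  let ?K = "(same_block ?S)\<^sup>* `` {?ux}"
  have uxS: "?ux \<in> \<Union>?S" by (rule stack_ux(1)[OF d2 i])
  have K: "?K \<in> ?Cs" using uxS by (rule comp_of)
  have uxK: "?ux \<in> ?K" by simp
  have oux: "outer ?ux" unfolding outer_def by simp
  have disj: "\<And>C C' v. C \<in> ?Cs \<Longrightarrow> C' \<in> ?Cs \<Longrightarrow> v \<in> C \<Longrightarrow> v \<in> C' \<Longrightarrow> C = C'"
    by (rule comp_disj)
  have inj: "\<And>v w. v \<in> \<Union>?Cs \<Longrightarrow> w \<in> \<Union>?Cs \<Longrightarrow> outer v \<Longrightarrow> outer w \<Longrightarrow> fst v = fst w \<Longrightarrow> v = w"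
    unfolding comp_Union by (rule stack_inj)
  have Kne: "?K \<noteq> {?ux}"
  proof -
    have "i \<in> \<Union>d2" using d2 i by (simp add: diag_Union)
    then obtain B where B: "B \<in> d2" "i \<in> B" by (rule UnionE)
    have "B \<noteq> {i}" using B ns by auto
    with B(2) obtain j where j: "j \<in> B" "j \<noteq> i" by auto
    have "f2 i = ?ux" unfolding f2_def using i by simp
    then have "?ux \<in> tag2 B" unfolding tag2_eq using B(2) by (metis image_eqI)
    moreover have "f2 j \<in> tag2 B" unfolding tag2_eq using j(1) by simp
    moreover have "tag2 B \<in> ?S" unfolding stack_def using B(1) by simp
    ultimately have "f2 j \<in> ?K" using comp_same[OF _ _ _ K uxK] by metis
    moreover have "f2 j \<noteq> ?ux" using j(2) \<open>f2 i = ?ux\<close> inj_f2 by (metis injD)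
    ultimately show ?thesis by (metis singletonD)
  qed
  have fin: "finite ?Cs" using stack_finite[OF d1 d2] by (rule comp_finite)
  have ne: "{} \<notin> ?Cs" using comp_ne by metis
  have e1: "components (detach ?ux ?S) = detach ?ux ?Cs"
    using stack_ux[OF d2 i] by (rule detach_components)
  have e2: "card (mids (detach ?ux ?Cs)) = card (mids ?Cs) + (if \<forall>v\<in>?K-{?ux}. \<not> outer v then 1 else 0)"
    using fin disj ne K uxK Kne oux by (rule mids_detach)
  have e3: "(\<forall>v\<in>?K-{?ux}. \<not> outer v) \<longleftrightarrow> {i} \<in> cmp ?Cs"
    using cmp_single[OF inj disj K uxK oux] unfolding fst_conv by (rule sym)
  have "nmid d1 (detach i d2) = card (mids (detach ?ux ?Cs))"
    unfolding nmid_mids stack_detach[OF d1 i(1)] e1 ..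
  also have "\<dots> = card (mids ?Cs) + (if {i} \<in> cmp ?Cs then 1 else 0)"
    unfolding e2 e3 ..
  finally show ?thesis unfolding nmid_mids compose_cmp .
qed

lemma pair_compose:
  assumes d1: "d1 \<in> diagrams n" and d2: "d2 \<in> diagrams n"
    and B: "B \<in> d2" "z1 \<in> B" "z2 \<in> B" and z: "z1 > 0" "z2 > 0"
  shows "\<exists>E\<in>compose d1 d2. z1 \<in> E \<and> z2 \<in> E"
proof -
  let ?S = "stack d1 d2"
  let ?Cs = "components ?S"
  have TB: "tag2 B \<in> ?S" unfolding stack_def using B(1) by simp
  have u1: "f2 z1 \<in> tag2 B" unfolding tag2_eq using B(2) by simp
  have u2: "f2 z2 \<in> tag2 B" unfolding tag2_eq using B(3) by simp
  have u1S: "f2 z1 \<in> \<Union>?S" using TB u1 by (rule UnionI)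
  let ?K = "(same_block ?S)\<^sup>* `` {f2 z1}"
  have K: "?K \<in> ?Cs" using u1S by (rule comp_of)
  have k1: "f2 z1 \<in> ?K" by simp
  have k2: "f2 z2 \<in> ?K" using comp_same[OF TB u1 u2 K k1] .
  have o1: "outer (f2 z1)" using z outer_f2 by simp
  have o2: "outer (f2 z2)" using z outer_f2 by simp
  have E: "fst ` (?K \<inter> Collect outer) \<in> compose d1 d2"
  proof -
    have "\<exists>u\<in>?K. outer u" using k1 o1 by (rule bexI[rotated])
    then show ?thesis unfolding compose_cmp cmp_mem by (rule bexI[OF conjI[OF _ refl] K])
  qed
  have "f2 z1 \<in> ?K \<inter> Collect outer" using k1 o1 by (rule IntI[OF _ CollectI])
  then have "fst (f2 z1) \<in> fst ` (?K \<inter> Collect outer)" by (rule imageI)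
  then have 1: "z1 \<in> fst ` (?K \<inter> Collect outer)" using fst_f2_pos[of z1] z(1) by simp
  have "f2 z2 \<in> ?K \<inter> Collect outer" using k2 o2 by (rule IntI[OF _ CollectI])
  then have "fst (f2 z2) \<in> fst ` (?K \<inter> Collect outer)" by (rule imageI)
  then have 2: "z2 \<in> fst ` (?K \<inter> Collect outer)" using fst_f2_pos[of z2] z(2) by simp
  have "z1 \<in> fst ` (?K \<inter> Collect outer) \<and> z2 \<in> fst ` (?K \<inter> Collect outer)" using 1 2 by (rule conjI)
  then show ?thesis using E by (rule bexI)
qed

lemma detach_diag:
  assumes d: "d \<in> diagrams n" and i: "i \<in> nodes n"
  shows "detach i d \<in> diagrams n"
proof -
  have "partition_on (nodes n) (detach i d)"
  proof (rule partition_onI)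
    show "\<Union>(detach i d) = nodes n"
      using i diag_Union[OF d] detach_Union by metis
  next
    fix p q assume p: "p \<in> detach i d" and q: "q \<in> detach i d" and pq: "p \<noteq> q"
    show "disjnt p q"
    proof -
      from p consider "p = {i}" | B where "B \<in> d" "p = B - {i}"
        unfolding detach_mem by blast
      then show ?thesis
      proof cases
        case 1
        from q consider "q = {i}" | B' where "B' \<in> d" "q = B' - {i}"
          unfolding detach_mem by blast
        then show ?thesis
        proof cases
          case 1 then show ?thesis using pq \<open>p = {i}\<close> by simp
        next
          case (2 B') then show ?thesis using \<open>p = {i}\<close> by (simp add: disjnt_def)
        qed
      next
        case (2 B)
        from q consider "q = {i}" | B' where "B' \<in> d" "q = B' - {i}"
          unfolding detach_mem by blast
        then show ?thesis
        proof cases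
          case 1 then show ?thesis using 2 by (auto simp: disjnt_def)
        next
          case (2 B')
          have "B \<noteq> B'" using pq \<open>p = B - {i}\<close> 2 by auto
          then have "B \<inter> B' = {}" using diag_disj[OF d \<open>B \<in> d\<close> 2(1)] by blast
          then show ?thesis using 2 \<open>p = B - {i}\<close> by (auto simp: disjnt_def)
        qed
      qed
    qed
  next
    show "{} \<notin> detach i d" by (simp add: detach_def)
  qed
  then show ?thesis unfolding diagrams_def by simp
qed



definition JP :: "nat set \<Rightarrow> int set set \<Rightarrow> bool" where
  "JP Z d \<longleftrightarrow> (\<exists>B\<in>d. (\<exists>z\<in>Z. B = {int z}) \<or>
                      (\<exists>z1\<in>Z. \<exists>z2\<in>Z. z1 \<noteq> z2 \<and> int z1 \<in> B \<and> int z2 \<in> B))"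

lemma J_eq: "J_ideal n Z = span_diag n (JP Z)"
  unfolding J_ideal_def JP_def ..

lemma pos_nodes: "z \<in> {1..n} \<Longrightarrow> int z \<in> nodes n \<and> int z > 0"
  unfolding nodes_def by auto

lemma JP_compose:
  assumes Z: "Z \<subseteq> {1..n}" and d1: "d1 \<in> diagrams n" and d2: "d2 \<in> diagrams n"
    and J: "JP Z d2"
  shows "JP Z (compose d1 d2)"
proof -
  from J obtain B where B: "B \<in> d2" and
    h: "(\<exists>z\<in>Z. B = {int z}) \<or> (\<exists>z1\<in>Z. \<exists>z2\<in>Z. z1 \<noteq> z2 \<and> int z1 \<in> B \<and> int z2 \<in> B)"
    unfolding JP_def by blast
  from h show ?thesis
  proof
    assume "\<exists>z\<in>Z. B = {int z}"
    then obtain z where z: "z \<in> Z" "B = {int z}" by blast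
    have zn: "int z \<in> nodes n \<and> int z > 0" using z(1) Z pos_nodes by blast
    have "{int z} \<in> compose d1 d2"
      using single_compose[OF d1 d2 _ _ ] zn B z(2) by blast
    then show ?thesis unfolding JP_def using z(1) by blast
  next
    assume "\<exists>z1\<in>Z. \<exists>z2\<in>Z. z1 \<noteq> z2 \<and> int z1 \<in> B \<and> int z2 \<in> B"
    then obtain z1 z2 where z: "z1 \<in> Z" "z2 \<in> Z" "z1 \<noteq> z2" "int z1 \<in> B" "int z2 \<in> B" by blast
    have p1: "int z1 > 0" using z(1) Z pos_nodes by blast
    have p2: "int z2 > 0" using z(2) Z pos_nodes by blast
    obtain E where E: "E \<in> compose d1 d2" "int z1 \<in> E" "int z2 \<in> E"
      using pair_compose[OF d1 d2 B z(4) z(5) p1 p2] by blast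
    then show ?thesis unfolding JP_def using z(1,2,3) by blast
  qed
qed

lemma JP_detach:
  assumes xZ: "x \<notin> Z" and J: "JP Z d"
  shows "JP Z (detach (int x) d)"
proof -
  from J obtain B where B: "B \<in> d" and
    h: "(\<exists>z\<in>Z. B = {int z}) \<or> (\<exists>z1\<in>Z. \<exists>z2\<in>Z. z1 \<noteq> z2 \<and> int z1 \<in> B \<and> int z2 \<in> B)"
    unfolding JP_def by blast
  from h show ?thesis
  proof
    assume "\<exists>z\<in>Z. B = {int z}"
    then obtain z where z: "z \<in> Z" "B = {int z}" by blast
    have "z \<noteq> x" using z(1) xZ by auto
    then have e: "B - {int x} = {int z}" using z(2) by auto
    then have "B - {int x} \<noteq> {}" by simp
    with B have "B - {int x} \<in> detach (int x) d" by (rule detach_memI)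
    then have mem: "{int z} \<in> detach (int x) d" using e by simp
    have "(\<exists>z'\<in>Z. {int z} = {int z'}) \<or> (\<exists>z1\<in>Z. \<exists>z2\<in>Z. z1 \<noteq> z2 \<and> int z1 \<in> {int z} \<and> int z2 \<in> {int z})"
      by (rule disjI1, rule bexI[OF refl z(1)])
    then show ?thesis unfolding JP_def using mem by (rule bexI)
  next
    assume "\<exists>z1\<in>Z. \<exists>z2\<in>Z. z1 \<noteq> z2 \<and> int z1 \<in> B \<and> int z2 \<in> B"
    then obtain z1 z2 where z: "z1 \<in> Z" "z2 \<in> Z" "z1 \<noteq> z2" "int z1 \<in> B" "int z2 \<in> B" by blast
    have "z1 \<noteq> x" "z2 \<noteq> x" using z(1,2) xZ by auto
    then have m: "int z1 \<in> B - {int x}" "int z2 \<in> B - {int x}" using z(4,5) by auto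
    then have "B - {int x} \<noteq> {}" by auto
    with B have mem: "B - {int x} \<in> detach (int x) d" by (rule detach_memI)
    have "\<exists>z1\<in>Z. \<exists>z2\<in>Z. z1 \<noteq> z2 \<and> int z1 \<in> B - {int x} \<and> int z2 \<in> B - {int x}"
      using z(1,2,3) m by blast
    then have "(\<exists>z'\<in>Z. B - {int x} = {int z'}) \<or> (\<exists>z1\<in>Z. \<exists>z2\<in>Z. z1 \<noteq> z2 \<and> int z1 \<in> B - {int x} \<and> int z2 \<in> B - {int x})"
      by (rule disjI2)
    then show ?thesis unfolding JP_def using mem by (rule bexI)
  qed
qed


lemma span_mem: "f \<in> span_diag n P \<longleftrightarrow> (\<forall>d. d \<notin> diagrams n \<longrightarrow> f d = 0) \<and> (\<forall>d. f d \<noteq> 0 \<longrightarrow> P d)"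
  unfolding span_diag_def Pn_def by simp

lemma Pn_mem: "f \<in> Pn n \<longleftrightarrow> (\<forall>d. d \<notin> diagrams n \<longrightarrow> f d = 0)"
  unfolding Pn_def by simp

lemma span_Pn: "f \<in> span_diag n P \<Longrightarrow> f \<in> Pn n"
  unfolding span_diag_def by simp

lemma span_zero: "(\<lambda>_. 0) \<in> span_diag n P"
  unfolding span_mem by simp

lemma span_add: "f \<in> span_diag n P \<Longrightarrow> g \<in> span_diag n P \<Longrightarrow> (\<lambda>d. f d + g d) \<in> span_diag n P"
  unfolding span_mem by (metis add.right_neutral add_0)

lemma span_diff: "f \<in> span_diag n P \<Longrightarrow> g \<in> span_diag n P \<Longrightarrow> (\<lambda>d. f d - g d) \<in> span_diag n P"
  unfolding span_mem by (metis diff_self diff_zero cancel_comm_monoid_add_class.diff_zero)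

lemma span_scal: "f \<in> span_diag n P \<Longrightarrow> (\<lambda>d. r * f d) \<in> span_diag n P"
  unfolding span_mem by (metis mult_zero_right)

lemma Pn_add: "f \<in> Pn n \<Longrightarrow> g \<in> Pn n \<Longrightarrow> (\<lambda>d. f d + g d) \<in> Pn n"
  unfolding Pn_mem by simp

lemma Pn_diff: "f \<in> Pn n \<Longrightarrow> g \<in> Pn n \<Longrightarrow> (\<lambda>d. f d - g d) \<in> Pn n"
  unfolding Pn_mem by simp

lemma Pn_scal: "f \<in> Pn n \<Longrightarrow> (\<lambda>d. r * f d) \<in> Pn n"
  unfolding Pn_mem by simp

lemma coset_eq_imp:
  assumes J0: "(\<lambda>_. 0) \<in> J" and Jd: "\<And>f g. f \<in> J \<Longrightarrow> g \<in> J \<Longrightarrow> (\<lambda>d. f d - g d) \<in> J"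
    and eq: "coset J v = coset J w"
  shows "(\<lambda>d. v d - w d) \<in> J"
proof -
  have "\<exists>j\<in>J. v = (\<lambda>d. v d + j d)" using J0 by (rule bexI[rotated]) simp
  then have "v \<in> coset J v" unfolding coset_def by simp
  then have "v \<in> coset J w" using eq by simp
  then obtain j where j: "j \<in> J" "v = (\<lambda>d. w d + j d)" unfolding coset_def by blast
  then have "(\<lambda>d. v d - w d) = j" by auto
  then show ?thesis using j(1) by simp
qed

lemma coset_eqI:
  assumes Ja: "\<And>f g. f \<in> J \<Longrightarrow> g \<in> J \<Longrightarrow> (\<lambda>d. f d + g d) \<in> J"
    and Jd: "\<And>f g. f \<in> J \<Longrightarrow> g \<in> J \<Longrightarrow> (\<lambda>d. f d - g d) \<in> J"
    and J0: "(\<lambda>_. 0) \<in> J"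
    and h: "(\<lambda>d. v d - w d) \<in> J"
  shows "coset J v = coset J w"
proof
  show "coset J v \<subseteq> coset J w"
  proof
    fix y assume "y \<in> coset J v"
    then obtain j where j: "j \<in> J" "y = (\<lambda>d. v d + j d)" unfolding coset_def by blast
    have jj: "(\<lambda>d. (v d - w d) + j d) \<in> J" using Ja[OF h j(1)] .
    have "\<exists>j'\<in>J. y = (\<lambda>d. w d + j' d)"
      by (rule bexI[OF _ jj]) (use j(2) in \<open>simp add: algebra_simps\<close>)
    then show "y \<in> coset J w" unfolding coset_def by simp
  qed
  show "coset J w \<subseteq> coset J v"
  proof
    fix y assume "y \<in> coset J w"
    then obtain j where j: "j \<in> J" "y = (\<lambda>d. w d + j d)" unfolding coset_def by blast
    have h': "(\<lambda>d. w d - v d) \<in> J"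
    proof -
      have "(\<lambda>d. 0 - (v d - w d)) \<in> J" using Jd[OF J0 h] .
      then show ?thesis by simp
    qed
    have jj: "(\<lambda>d. (w d - v d) + j d) \<in> J" using Ja[OF h' j(1)] .
    have "\<exists>j'\<in>J. y = (\<lambda>d. v d + j' d)"
      by (rule bexI[OF _ jj]) (use j(2) in \<open>simp add: algebra_simps\<close>)
    then show "y \<in> coset J v" unfolding coset_def by simp
  qed
qed

lemma sum_nonzero: "sum g A \<noteq> 0 \<Longrightarrow> \<exists>a\<in>A. g a \<noteq> 0"
  using sum.neutral by metis

lemma pmult_alt:
  "pmult \<delta> n f g e = (\<Sum>d1\<in>diagrams n. \<Sum>d2\<in>diagrams n.
       if compose d1 d2 = e then f d1 * g d2 * \<delta> ^ nmid d1 d2 else 0)"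
proof -
  let ?D = "diagrams n"
  have fin: "finite (?D \<times> ?D)" using diagrams_finite by simp
  have s: "{(d1, d2). d1 \<in> ?D \<and> d2 \<in> ?D \<and> compose d1 d2 = e} = {q \<in> ?D \<times> ?D. compose (fst q) (snd q) = e}"
    by auto
  have "pmult \<delta> n f g e = (\<Sum>q\<in>{q \<in> ?D \<times> ?D. compose (fst q) (snd q) = e}. f (fst q) * g (snd q) * \<delta> ^ nmid (fst q) (snd q))"
    unfolding pmult_def s by (simp add: case_prod_beta)
  also have "\<dots> = (\<Sum>q\<in>?D \<times> ?D. if compose (fst q) (snd q) = e then f (fst q) * g (snd q) * \<delta> ^ nmid (fst q) (snd q) else 0)"
    using fin by (rule sum.inter_filter)
  also have "\<dots> = (\<Sum>d1\<in>?D. \<Sum>d2\<in>?D. if compose d1 d2 = e then f d1 * g d2 * \<delta> ^ nmid d1 d2 else 0)"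
    by (simp add: sum.cartesian_product case_prod_beta)
  finally show ?thesis .
qed

lemma pmult_Pn: "pmult \<delta> n f g \<in> Pn n"
  unfolding Pn_mem
proof (intro allI impI)
  fix e assume e: "e \<notin> diagrams n"
  show "pmult \<delta> n f g e = 0" unfolding pmult_alt
    by (rule sum.neutral, rule ballI, rule sum.neutral) (use e compose_diag in auto)
qed

lemma pmult_J:
  assumes Z: "Z \<subseteq> {1..n}" and j: "j \<in> J_ideal n Z"
  shows "pmult \<delta> n f j \<in> J_ideal n Z"
  unfolding J_eq span_mem
proof (intro conjI allI impI)
  fix e assume "e \<notin> diagrams n"
  then show "pmult \<delta> n f j e = 0" using pmult_Pn unfolding Pn_mem by blast
next
  fix e assume "pmult \<delta> n f j e \<noteq> 0"
  then obtain d1 where d1: "d1 \<in> diagrams n" and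
      "(\<Sum>d2\<in>diagrams n. if compose d1 d2 = e then f d1 * j d2 * \<delta> ^ nmid d1 d2 else 0) \<noteq> 0"
    unfolding pmult_alt using sum_nonzero by blast
  then obtain d2 where d2: "d2 \<in> diagrams n" and
      nz: "(if compose d1 d2 = e then f d1 * j d2 * \<delta> ^ nmid d1 d2 else 0) \<noteq> 0"
    using sum_nonzero by blast
  have ce: "compose d1 d2 = e" using nz by (auto split: if_splits)
  have "j d2 \<noteq> 0" using nz by (auto split: if_splits)
  then have "JP Z d2" using j unfolding J_eq span_mem by blast
  then have "JP Z (compose d1 d2)" using JP_compose[OF Z d1 d2] by blast
  then show "JP Z e" using ce by simp
qed



definition cc :: "'r::comm_ring_1 \<Rightarrow> nat \<Rightarrow> int set set \<Rightarrow> 'r" where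
  "cc u x d = (if {int x} \<in> d then 1 else u)"

definition TT :: "'r::comm_ring_1 \<Rightarrow> nat \<Rightarrow> nat \<Rightarrow> (int set set \<Rightarrow> 'r) \<Rightarrow> (int set set \<Rightarrow> 'r)" where
  "TT u n x v = (\<lambda>e. \<Sum>d\<in>diagrams n. if detach (int x) d = e then cc u x d * v d else 0)"

lemma TT_Pn:
  assumes x: "x \<in> {1..n}"
  shows "TT u n x v \<in> Pn n"
  unfolding Pn_mem
proof (intro allI impI)
  fix e assume e: "e \<notin> diagrams n"
  have xn: "int x \<in> nodes n" using pos_nodes[OF x] by simp
  show "TT u n x v e = 0" unfolding TT_def
  proof (rule sum.neutral, rule ballI)
    fix d assume d: "d \<in> diagrams n"
    have "detach (int x) d \<noteq> e" using detach_diag[OF d xn] e by auto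
    then show "(if detach (int x) d = e then cc u x d * v d else 0) = 0" by simp
  qed
qed

lemma TT_A:
  assumes x: "x \<in> {1..n}"
  shows "TT u n x v \<in> A_mod n x"
  unfolding A_mod_def span_mem
proof (intro conjI allI impI)
  fix e assume "e \<notin> diagrams n"
  then show "TT u n x v e = 0" using TT_Pn[OF x] unfolding Pn_mem by blast
next
  fix e assume "TT u n x v e \<noteq> 0"
  then obtain d where "(if detach (int x) d = e then cc u x d * v d else 0) \<noteq> 0"
    unfolding TT_def using sum_nonzero by blast
  then have "detach (int x) d = e" by (auto split: if_splits)
  then show "{int x} \<in> e" by (auto simp: detach_def)
qed

lemma TT_J:
  assumes x: "x \<in> {1..n}" and xZ: "x \<notin> Z" and v: "v \<in> J_ideal n Z"
  shows "TT u n x v \<in> J_ideal n Z"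
  unfolding J_eq span_mem
proof (intro conjI allI impI)
  fix e assume "e \<notin> diagrams n"
  then show "TT u n x v e = 0" using TT_Pn[OF x] unfolding Pn_mem by blast
next
  fix e assume "TT u n x v e \<noteq> 0"
  then obtain d where "(if detach (int x) d = e then cc u x d * v d else 0) \<noteq> 0"
    unfolding TT_def using sum_nonzero by blast
  then have de: "detach (int x) d = e" and vd: "v d \<noteq> 0" by (auto split: if_splits)
  have "JP Z d" using v vd unfolding J_eq span_mem by blast
  then have "JP Z (detach (int x) d)" using xZ by (rule JP_detach[rotated])
  then show "JP Z e" using de by simp
qed

lemma TT_id:
  assumes a: "a \<in> A_mod n x"
  shows "TT u n x a = a"
proof (rule ext)
  fix e
  let ?D = "diagrams n"
  have "TT u n x a e = (\<Sum>d\<in>?D. if d = e then a d else 0)"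
    unfolding TT_def
  proof (rule sum.cong[OF refl])
    fix d assume d: "d \<in> ?D"
    show "(if detach (int x) d = e then cc u x d * a d else 0) = (if d = e then a d else 0)"
    proof (cases "a d = 0")
      case True then show ?thesis unfolding True by simp
    next
      case False
      then have s: "{int x} \<in> d" using a unfolding A_mod_def span_mem by blast
      then have "detach (int x) d = d" using detach_self[OF d] by simp
      moreover have "cc u x d = 1" using s unfolding cc_def by simp
      ultimately show ?thesis by (simp only: mult_1_left)
    qed
  qed
  also have "\<dots> = (if e \<in> ?D then a e else 0)" using diagrams_finite by (rule sum.delta)
  also have "\<dots> = a e" using a unfolding A_mod_def span_mem by auto
  finally show "TT u n x a e = a e" .
qed

lemma TT_add: "TT u n x (\<lambda>d. v d + w d) e = TT u n x v e + TT u n x w e"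
  unfolding TT_def sum.distrib[symmetric] by (rule sum.cong) (simp_all add: distrib_left)

lemma TT_diff: "TT u n x (\<lambda>d. v d - w d) e = TT u n x v e - TT u n x w e"
  unfolding TT_def sum_subtractf[symmetric] by (rule sum.cong) (simp_all add: right_diff_distrib)

lemma TT_scal: "TT u n x (\<lambda>d. r * v d) e = r * TT u n x v e"
  unfolding TT_def sum_distrib_left by (rule sum.cong) (simp_all add: mult.left_commute)

lemma TT_zero: "TT u n x (\<lambda>_. 0) e = 0"
  unfolding TT_def by (rule sum.neutral) simp

lemma coef_key:
  assumes d1: "d1 \<in> diagrams n" and d2: "d2 \<in> diagrams n" and x: "x \<in> {1..n}"
    and du: "\<delta> * u = 1"
  shows "cc u x (compose d1 d2) * \<delta> ^ nmid d1 d2 = cc u x d2 * \<delta> ^ nmid d1 (detach (int x) d2)"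
proof -
  have xn: "int x > 0" "int x \<in> nodes n" using pos_nodes[OF x] by simp_all
  show ?thesis
  proof (cases "{int x} \<in> d2")
    case True
    then have "detach (int x) d2 = d2" using detach_self[OF d2] by simp
    moreover have "{int x} \<in> compose d1 d2" using single_compose[OF d1 d2 xn True] .
    ultimately show ?thesis using True unfolding cc_def by simp
  next
    case False
    have nm: "nmid d1 (detach (int x) d2) = nmid d1 d2 + (if {int x} \<in> compose d1 d2 then 1 else 0)"
      using nmid_detach[OF d1 d2 xn False] .
    show ?thesis
    proof (cases "{int x} \<in> compose d1 d2")
      case True
      have "cc u x d2 * \<delta> ^ nmid d1 (detach (int x) d2) = u * (\<delta> * \<delta> ^ nmid d1 d2)"
        using nm True False unfolding cc_def by simp
      also have "\<dots> = (\<delta> * u) * \<delta> ^ nmid d1 d2" by (simp add: ac_simps)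
      also have "\<dots> = \<delta> ^ nmid d1 d2" using du by simp
      finally show ?thesis using True unfolding cc_def by simp
    next
      case cF: False
      show ?thesis using nm cF False unfolding cc_def by simp
    qed
  qed
qed

lemma if_sum2:
  "(if Q then c * (\<Sum>a\<in>A. \<Sum>b\<in>B. if P a b then F a b else 0) else 0) =
   (\<Sum>a\<in>A. \<Sum>b\<in>B. if P a b \<and> Q then c * F a b else (0::'r::comm_ring_1))"
proof (cases Q)
  case True
  have "c * (\<Sum>a\<in>A. \<Sum>b\<in>B. if P a b then F a b else 0) = (\<Sum>a\<in>A. \<Sum>b\<in>B. c * (if P a b then F a b else 0))"
    by (simp add: sum_distrib_left)
  also have "\<dots> = (\<Sum>a\<in>A. \<Sum>b\<in>B. if P a b \<and> Q then c * F a b else 0)"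
    using True by (intro sum.cong refl) simp
  finally show ?thesis using True by simp
next
  case False then show ?thesis by simp
qed

lemma if_sum1:
  "(if Q then p * (\<Sum>a\<in>A. if P a then F a else 0) * k else 0) =
   (\<Sum>a\<in>A. if P a \<and> Q then p * F a * k else (0::'r::comm_ring_1))"
proof (cases Q)
  case True
  have "p * (\<Sum>a\<in>A. if P a then F a else 0) * k = (\<Sum>a\<in>A. p * (if P a then F a else 0) * k)"
    by (simp add: sum_distrib_left sum_distrib_right)
  also have "\<dots> = (\<Sum>a\<in>A. if P a \<and> Q then p * F a * k else 0)"
    using True by (intro sum.cong refl) simp
  finally show ?thesis using True by simp
next
  case False then show ?thesis by simp
qed

lemma sum_collapse:
  assumes "finite A" "a \<in> A"
  shows "(\<Sum>d\<in>A. if a = d \<and> Q d then H d else 0) = (if Q a then H a else (0::'r::comm_ring_1))"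
proof -
  have "(\<Sum>d\<in>A. if a = d \<and> Q d then H d else 0) = (\<Sum>d\<in>A. if a = d then (if Q d then H d else 0) else 0)"
    by (intro sum.cong refl) simp
  also have "\<dots> = (if Q a then H a else 0)" using assms by simp
  finally show ?thesis .
qed

lemma TT_pmult:
  assumes x: "x \<in> {1..n}" and du: "\<delta> * u = 1"
  shows "TT u n x (pmult \<delta> n p v) e = pmult \<delta> n p (TT u n x v) e"
proof -
  let ?D = "diagrams n"
  let ?det = "detach (int x)"
  have fin: "finite ?D" by (rule diagrams_finite)
  have xn: "int x \<in> nodes n" using pos_nodes[OF x] by simp
  have "TT u n x (pmult \<delta> n p v) e =
     (\<Sum>d\<in>?D. \<Sum>d1\<in>?D. \<Sum>d2\<in>?D. if compose d1 d2 = d \<and> ?det d = e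
        then cc u x d * (p d1 * v d2 * \<delta> ^ nmid d1 d2) else 0)"
    unfolding TT_def pmult_alt by (intro sum.cong refl) (rule if_sum2)
  also have "\<dots> = (\<Sum>d1\<in>?D. \<Sum>d\<in>?D. \<Sum>d2\<in>?D. if compose d1 d2 = d \<and> ?det d = e
        then cc u x d * (p d1 * v d2 * \<delta> ^ nmid d1 d2) else 0)"
    by (rule sum.swap)
  also have "\<dots> = (\<Sum>d1\<in>?D. \<Sum>d2\<in>?D. \<Sum>d\<in>?D. if compose d1 d2 = d \<and> ?det d = e
        then cc u x d * (p d1 * v d2 * \<delta> ^ nmid d1 d2) else 0)"
    by (rule sum.cong[OF refl], rule sum.swap)
  also have "\<dots> = (\<Sum>d1\<in>?D. \<Sum>d2\<in>?D. if ?det (compose d1 d2) = e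
        then cc u x (compose d1 d2) * (p d1 * v d2 * \<delta> ^ nmid d1 d2) else 0)"
  proof (intro sum.cong refl)
    fix d1 d2 assume d1: "d1 \<in> ?D" and d2: "d2 \<in> ?D"
    show "(\<Sum>d\<in>?D. if compose d1 d2 = d \<and> ?det d = e
        then cc u x d * (p d1 * v d2 * \<delta> ^ nmid d1 d2) else 0) =
      (if ?det (compose d1 d2) = e then cc u x (compose d1 d2) * (p d1 * v d2 * \<delta> ^ nmid d1 d2) else 0)"
      using fin compose_diag[OF d1 d2] by (rule sum_collapse)
  qed
  also have "\<dots> = (\<Sum>d1\<in>?D. \<Sum>d2\<in>?D. if compose d1 (?det d2) = e
        then p d1 * (cc u x d2 * v d2) * \<delta> ^ nmid d1 (?det d2) else 0)"
  proof (intro sum.cong refl)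
    fix d1 d2 assume d1: "d1 \<in> ?D" and d2: "d2 \<in> ?D"
    have c: "compose d1 (?det d2) = ?det (compose d1 d2)"
      using compose_detach[OF d1 d2 _ xn] x by simp
    have k: "cc u x (compose d1 d2) * \<delta> ^ nmid d1 d2 = cc u x d2 * \<delta> ^ nmid d1 (?det d2)"
      by (rule coef_key[OF d1 d2 x du])
    have "cc u x (compose d1 d2) * (p d1 * v d2 * \<delta> ^ nmid d1 d2) =
          p d1 * v d2 * (cc u x (compose d1 d2) * \<delta> ^ nmid d1 d2)" by (simp add: ac_simps)
    also have "\<dots> = p d1 * v d2 * (cc u x d2 * \<delta> ^ nmid d1 (?det d2))" using k by simp
    also have "\<dots> = p d1 * (cc u x d2 * v d2) * \<delta> ^ nmid d1 (?det d2)" by (simp add: ac_simps)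
    finally show "(if ?det (compose d1 d2) = e then cc u x (compose d1 d2) * (p d1 * v d2 * \<delta> ^ nmid d1 d2) else 0) =
       (if compose d1 (?det d2) = e then p d1 * (cc u x d2 * v d2) * \<delta> ^ nmid d1 (?det d2) else 0)"
      using c by simp
  qed
  also have "\<dots> = (\<Sum>d1\<in>?D. \<Sum>d\<in>?D. \<Sum>d2\<in>?D. if ?det d = d2 \<and> compose d1 d2 = e
        then p d1 * (cc u x d * v d) * \<delta> ^ nmid d1 d2 else 0)"
  proof (intro sum.cong refl)
    fix d1 d assume d1: "d1 \<in> ?D" and d: "d \<in> ?D"
    show "(if compose d1 (?det d) = e then p d1 * (cc u x d * v d) * \<delta> ^ nmid d1 (?det d) else 0) =
      (\<Sum>d2\<in>?D. if ?det d = d2 \<and> compose d1 d2 = e then p d1 * (cc u x d * v d) * \<delta> ^ nmid d1 d2 else 0)"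
      using fin detach_diag[OF d xn] by (rule sum_collapse[symmetric])
  qed
  also have "\<dots> = (\<Sum>d1\<in>?D. \<Sum>d2\<in>?D. \<Sum>d\<in>?D. if ?det d = d2 \<and> compose d1 d2 = e
        then p d1 * (cc u x d * v d) * \<delta> ^ nmid d1 d2 else 0)"
    by (rule sum.cong[OF refl], rule sum.swap)
  also have "\<dots> = pmult \<delta> n p (TT u n x v) e"
    unfolding TT_def pmult_alt by (intro sum.cong refl) (rule if_sum1[symmetric])
  finally show ?thesis .
qed



theorem proposition4p7:
  fixes \<delta> :: "'r::comm_ring_1" and n x :: nat and X :: "nat set"
  assumes "X \<subseteq> {1..n}" and "x \<in> X" and "\<exists>u. \<delta> * u = 1"
  shows "direct_summand_quot \<delta> n (J_ideal n (X - {x}))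
           (coset (J_ideal n (X - {x})) ` A_mod n x)"
proof -
  obtain u where du: "\<delta> * u = 1" using assms(3) by blast
  define Z where "Z = X - {x}"
  define J where "J = (J_ideal n Z :: (int set set \<Rightarrow> 'r) set)"
  define A where "A = (A_mod n x :: (int set set \<Rightarrow> 'r) set)"
  define T where "T = TT u n x"
  have x: "x \<in> {1..n}" using assms(1,2) by blast
  have Zs: "Z \<subseteq> {1..n}" using assms(1) unfolding Z_def by blast
  have xZ: "x \<notin> Z" unfolding Z_def by simp
  have J0: "(\<lambda>_. 0) \<in> J" unfolding J_def J_eq by (rule span_zero)
  have Jadd: "\<And>f g. f \<in> J \<Longrightarrow> g \<in> J \<Longrightarrow> (\<lambda>d. f d + g d) \<in> J"
    unfolding J_def J_eq by (rule span_add)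
  have Jdiff: "\<And>f g. f \<in> J \<Longrightarrow> g \<in> J \<Longrightarrow> (\<lambda>d. f d - g d) \<in> J"
    unfolding J_def J_eq by (rule span_diff)
  have Jscal: "\<And>f r. f \<in> J \<Longrightarrow> (\<lambda>d. r * f d) \<in> J"
    unfolding J_def J_eq by (rule span_scal)
  have JPn: "\<And>f. f \<in> J \<Longrightarrow> f \<in> Pn n"
    unfolding J_def J_eq by (rule span_Pn)
  have APn: "\<And>f. f \<in> A \<Longrightarrow> f \<in> Pn n"
    unfolding A_def A_mod_def by (rule span_Pn)
  have A0: "(\<lambda>_. 0) \<in> A" unfolding A_def A_mod_def by (rule span_zero)
  have TJ: "\<And>v. v \<in> J \<Longrightarrow> T v \<in> J"
    unfolding T_def J_def using x xZ by (rule TT_J)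
  have TA: "\<And>v. T v \<in> A" unfolding T_def A_def using x by (rule TT_A)
  have TPn: "\<And>v. T v \<in> Pn n" unfolding T_def using x by (rule TT_Pn)
  have Tid: "\<And>a. a \<in> A \<Longrightarrow> T a = a" unfolding T_def A_def by (rule TT_id)
  have Tdiff: "\<And>v w. T (\<lambda>d. v d - w d) = (\<lambda>e. T v e - T w e)"
    unfolding T_def by (rule ext) (rule TT_diff)
  have Tadd: "\<And>v w. T (\<lambda>d. v d + w d) = (\<lambda>e. T v e + T w e)"
    unfolding T_def by (rule ext) (rule TT_add)
  have Tscal: "\<And>v r. T (\<lambda>d. r * v d) = (\<lambda>e. r * T v e)"
    unfolding T_def by (rule ext) (rule TT_scal)
  have T0: "T (\<lambda>_. 0) = (\<lambda>_. 0)"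
    unfolding T_def by (rule ext) (rule TT_zero)
  have Tp: "\<And>(p :: int set set \<Rightarrow> 'r) v. T (pmult \<delta> n p v) = pmult \<delta> n p (T v)"
    unfolding T_def by (rule ext) (rule TT_pmult[OF x du])
  define N where "N = {coset J w | w. w \<in> Pn n \<and> T w \<in> J}"
  have Nmem: "coset J v \<in> N \<longleftrightarrow> T v \<in> J" if v: "v \<in> Pn n" for v
  proof
    assume "coset J v \<in> N"
    then obtain w where w: "coset J v = coset J w" "w \<in> Pn n" "T w \<in> J"
      unfolding N_def by blast
    have "(\<lambda>d. v d - w d) \<in> J" using J0 Jdiff w(1) by (rule coset_eq_imp)
    then have "T (\<lambda>d. v d - w d) \<in> J" by (rule TJ)
    then have "(\<lambda>e. T v e - T w e) \<in> J" using Tdiff by simp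
    then have "(\<lambda>e. (T v e - T w e) + T w e) \<in> J" using w(3) by (rule Jadd)
    then show "T v \<in> J" by simp
  next
    assume "T v \<in> J"
    then show "coset J v \<in> N" unfolding N_def using v by blast
  qed
  have cosetI: "\<And>v w. (\<lambda>d. v d - w d) \<in> J \<Longrightarrow> coset J v = coset J w"
    using Jadd Jdiff J0 by (rule coset_eqI)
  have qs: "quot_submodule \<delta> n J N"
    unfolding quot_submodule_def
  proof (intro conjI ballI allI impI)
    show "N \<subseteq> coset J ` Pn n" unfolding N_def by blast
    have "(\<lambda>_. 0) \<in> Pn n" unfolding Pn_mem by simp
    moreover have "T (\<lambda>_. 0) \<in> J" using T0 J0 by simp
    ultimately show "coset J (\<lambda>_. 0) \<in> N" unfolding N_def by blast
  next
    fix a b :: "int set set \<Rightarrow> 'r" assume a: "a \<in> Pn n" and b: "b \<in> Pn n" and ca: "coset J a \<in> N" and cb: "coset J b \<in> N"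
    have "T a \<in> J" "T b \<in> J" using Nmem a b ca cb by blast+
    then have "(\<lambda>e. T a e + T b e) \<in> J" by (rule Jadd)
    then have "T (\<lambda>d. a d + b d) \<in> J" using Tadd by simp
    moreover have "(\<lambda>d. a d + b d) \<in> Pn n" using a b by (rule Pn_add)
    ultimately show "coset J (\<lambda>d. a d + b d) \<in> N" using Nmem by blast
  next
    fix r :: 'r and v :: "int set set \<Rightarrow> 'r" assume v: "v \<in> Pn n" and cv: "coset J v \<in> N"
    have "T v \<in> J" using Nmem v cv by blast
    then have "(\<lambda>e. r * T v e) \<in> J" by (rule Jscal)
    then have "T (\<lambda>d. r * v d) \<in> J" using Tscal by simp
    moreover have "(\<lambda>d. r * v d) \<in> Pn n" using v by (rule Pn_scal)
    ultimately show "coset J (\<lambda>d. r * v d) \<in> N" using Nmem by blast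
  next
    fix p v :: "int set set \<Rightarrow> 'r" assume p: "p \<in> Pn n" and v: "v \<in> Pn n" and cv: "coset J v \<in> N"
    have "T v \<in> J" using Nmem v cv by blast
    then have "pmult \<delta> n p (T v) \<in> J" unfolding J_def using Zs pmult_J by blast
    then have "T (pmult \<delta> n p v) \<in> J" using Tp by simp
    moreover have "pmult \<delta> n p v \<in> Pn n" by (rule pmult_Pn)
    ultimately show "coset J (pmult \<delta> n p v) \<in> N" using Nmem by blast
  qed
  have inter: "coset J ` A \<inter> N = {coset J (\<lambda>_. 0)}"
  proof
    show "coset J ` A \<inter> N \<subseteq> {coset J (\<lambda>_. 0)}"
    proof
      fix Y assume Y: "Y \<in> coset J ` A \<inter> N"
      then obtain a where a: "a \<in> A" "Y = coset J a" by blast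
      have aP: "a \<in> Pn n" using a(1) by (rule APn)
      have "coset J a \<in> N" using Y a(2) by simp
      then have "T a \<in> J" using Nmem[OF aP] by simp
      then have "a \<in> J" using Tid[OF a(1)] by simp
      then have "(\<lambda>d. a d - 0) \<in> J" by simp
      then have "coset J a = coset J (\<lambda>_. 0)" by (rule cosetI)
      then show "Y \<in> {coset J (\<lambda>_. 0)}" using a(2) by simp
    qed
    have "coset J (\<lambda>_. 0) \<in> coset J ` A" using A0 by (rule imageI)
    moreover have "coset J (\<lambda>_. 0) \<in> N"
    proof -
      have "(\<lambda>_. 0) \<in> Pn n" unfolding Pn_mem by simp
      moreover have "T (\<lambda>_. 0) \<in> J" using T0 J0 by simp
      ultimately show ?thesis unfolding N_def by blast
    qed
    ultimately show "{coset J (\<lambda>_. 0)} \<subseteq> coset J ` A \<inter> N" by simp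
  qed
  have dec: "\<forall>v\<in>Pn n. \<exists>a\<in>Pn n. \<exists>c\<in>Pn n. coset J a \<in> coset J ` A \<and> coset J c \<in> N \<and>
                       coset J v = coset J (\<lambda>d. a d + c d)"
  proof
    fix v :: "int set set \<Rightarrow> 'r" assume v: "v \<in> Pn n"
    let ?a = "T v"
    let ?c = "\<lambda>d. v d - T v d"
    have aP: "?a \<in> Pn n" by (rule TPn)
    have cP: "?c \<in> Pn n" using v aP by (rule Pn_diff)
    have aA: "coset J ?a \<in> coset J ` A" using TA by (rule imageI)
    have "T ?c = (\<lambda>e. T v e - T (T v) e)" by (rule Tdiff)
    also have "T (T v) = T v" using TA by (rule Tid)
    finally have "T ?c = (\<lambda>_. 0)" by simp
    then have "T ?c \<in> J" using J0 by simp
    then have cN: "coset J ?c \<in> N" using Nmem[OF cP] by blast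
    have "(\<lambda>d. ?a d + ?c d) = v" by simp
    then have "coset J v = coset J (\<lambda>d. ?a d + ?c d)" by simp
    then show "\<exists>a\<in>Pn n. \<exists>c\<in>Pn n. coset J a \<in> coset J ` A \<and> coset J c \<in> N \<and>
                       coset J v = coset J (\<lambda>d. a d + c d)"
      using aP cP aA cN by blast
  qed
  have "direct_summand_quot \<delta> n J (coset J ` A)"
    unfolding direct_summand_quot_def using qs inter dec by blast
  then show ?thesis unfolding J_def A_def Z_def .
qed

end
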